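(* Let $Y:(\mathbb S^{d-1})^k\to\mathbb R$ be a $k$-positive definite kernel and let $\mu\in\mathcal P(\mathbb S^{d-1})$ satisfy $I_Y(\mu)=0$. Then $\mu$ minimizes $I_Y$ over $\mathcal P(\mathbb S^{d-1})$.
   Context: $\mathbb S^{d-1}$ is the unit sphere in $\mathbb R^d$, $\mathcal P(\mathbb S^{d-1})$ its Borel probability measures, $I_Y(\mu)=\int\cdots\int Y(x_1,\ldots,x_k)\,d\mu(x_1)\cdots d\mu(x_k)$. A continuous kernel $Y$ symmetric in its first two variables is $k$-positive definite if for all fixed $z_3,\ldots,z_k\in\mathbb S^{d-1}$ and every finite signed Borel measure $\nu$ on $\mathbb S^{d-1}$, $\int\int Y(x,y,z_3,\ldots,z_k)\,d\nu(x)d\nu(y)\ge0$. *)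

theory Defs
  imports "HOL-Probability.Probability"
begin

text \<open>The unit sphere of the Euclidean space 'a (dimension d = DIM('a)).\<close>
abbreviation Sph :: "'a::euclidean_space set" where
  "Sph \<equiv> sphere 0 1"

abbreviation sphere_borel :: "'a::euclidean_space measure" where
  "sphere_borel \<equiv> restrict_space borel Sph"

abbreviation sphere_pow :: "nat \<Rightarrow> (nat \<Rightarrow> 'a::euclidean_space) set" where
  "sphere_pow k \<equiv> PiE {..<k} (\<lambda>_. Sph)"

text \<open>The argument tuple (x, y, z_3, ..., z_k) (indices 0, 1, 2, ..., k-1).\<close>
definition kargs :: "nat \<Rightarrow> 'a \<Rightarrow> 'a \<Rightarrow> (nat \<Rightarrow> 'a) \<Rightarrow> (nat \<Rightarrow> 'a)" where
  "kargs k x y z = restrict (\<lambda>i. if i = 0 then x else if i = 1 then y else z i) {..<k}"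

definition energy :: "nat \<Rightarrow> ((nat \<Rightarrow> 'a) \<Rightarrow> real) \<Rightarrow> 'a measure \<Rightarrow> real" where
  "energy k Y \<mu> = (\<integral>w. Y w \<partial>(PiM {..<k} (\<lambda>_. \<mu>)))"

definition dint :: "('a \<Rightarrow> 'a \<Rightarrow> real) \<Rightarrow> 'a measure \<Rightarrow> 'a measure \<Rightarrow> real" where
  "dint K \<nu>1 \<nu>2 = (\<integral>x. (\<integral>y. K x y \<partial>\<nu>2) \<partial>\<nu>1)"

text \<open>Double integral against the finite signed measure nu = nu_plus - nu_minus.\<close>
definition signed_dint :: "('a \<Rightarrow> 'a \<Rightarrow> real) \<Rightarrow> 'a measure \<Rightarrow> 'a measure \<Rightarrow> real" where
  "signed_dint K np nm = dint K np np - dint K np nm - dint K nm np + dint K nm nm"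

text \<open>Every finite signed Borel measure on the sphere is a
  difference of two finite (positive) Borel measures on the sphere (Jordan decomposition),
  so we quantify over such pairs.\<close>
definition k_pos_def :: "nat \<Rightarrow> ((nat \<Rightarrow> 'a::euclidean_space) \<Rightarrow> real) \<Rightarrow> bool" where
  "k_pos_def k Y \<longleftrightarrow>
     (\<forall>z \<in> PiE {2..<k} (\<lambda>_. Sph). \<forall>np nm.
        finite_measure np \<longrightarrow> sets np = sets sphere_borel \<longrightarrow>
        finite_measure nm \<longrightarrow> sets nm = sets sphere_borel \<longrightarrow>
        signed_dint (\<lambda>x y. Y (kargs k x y z)) np nm \<ge> 0)"

definition sym12_kernel :: "nat \<Rightarrow> ((nat \<Rightarrow> 'a::euclidean_space) \<Rightarrow> real) \<Rightarrow> bool" where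
  "sym12_kernel k Y \<longleftrightarrow> continuous_on (sphere_pow k) Y \<and>
     (\<forall>w \<in> sphere_pow k. Y (w(0 := w 1, 1 := w 0)) = Y w)"

end

theory Submission
  imports Defs
begin

lemma inner_nonneg:
  fixes Y :: "(nat \<Rightarrow> 'a::euclidean_space) \<Rightarrow> real" and k :: nat
  assumes k: "2 \<le> k" and pd: "k_pos_def k Y"
    and P: "prob_space \<nu>" and S: "sets \<nu> = sets sphere_borel"
    and z: "z \<in> space (PiM {2..<k} (\<lambda>_. \<nu>))"
  shows "0 \<le> (\<integral>y. Y (merge {2..<k} {0,1} (z, y)) \<partial>PiM {0,1} (\<lambda>_. \<nu>))"
proof -
  interpret product_sigma_finite "\<lambda>_. \<nu>"
    unfolding product_sigma_finite_def using P prob_space_imp_sigma_finite by blast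
  have sp: "space \<nu> = Sph"
    using sets_eq_imp_space_eq[OF S] by (simp add: space_restrict_space)
  have zS: "z \<in> PiE {2..<k} (\<lambda>_. Sph)" using z sp by (simp add: space_PiM)
  define F where "F y = Y (merge {2..<k} {0,1} (z, y))" for y
  show ?thesis
  proof (cases "integrable (PiM (insert 1 {0}) (\<lambda>_. \<nu>)) F")
    case False
    have e1: "{0::nat,1} = insert 1 {0}" by auto
    have "(\<integral>y. F y \<partial>PiM {0,1} (\<lambda>_. \<nu>)) = 0"
      unfolding e1 using False by (rule not_integrable_integral_eq)
    then show ?thesis by (simp add: F_def)
  next
    case True
    have e1: "{0::nat,1} = insert 1 {0}" by auto
    have "(\<integral>y. F y \<partial>PiM {0,1} (\<lambda>_. \<nu>)) = (\<integral>x. (\<integral>t. F (x(1:=t)) \<partial>\<nu>) \<partial>PiM {0} (\<lambda>_. \<nu>))"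
      unfolding e1 by (rule product_integral_insert[OF _ _ True]) auto
    also have "0 \<le> \<dots>"
    proof -
      define g where "g x = (\<integral>t. F (x(1:=t)) \<partial>\<nu>)" for x
      show ?thesis
      proof (cases "integrable (PiM {0} (\<lambda>_. \<nu>)) g")
        case False
        then have "(\<integral>x. g x \<partial>PiM {0} (\<lambda>_. \<nu>)) = 0" by (rule not_integrable_integral_eq)
        then show ?thesis by (simp add: g_def)
      next
        case True
        have gm: "g \<in> borel_measurable (PiM {0} (\<lambda>_. \<nu>))" using True by auto
        define emb where "emb s = (\<lambda>j\<in>{0::nat}. s)" for s :: 'a
        have em: "emb \<in> measurable \<nu> (PiM {0} (\<lambda>_. \<nu>))"
          unfolding emb_def by (rule measurable_restrict) auto
        have "(\<integral>x. g x \<partial>PiM {0} (\<lambda>_. \<nu>)) = (\<integral>x. (g \<circ> emb) (x 0) \<partial>PiM {0::nat} (\<lambda>_. \<nu>))"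
        proof (rule Bochner_Integration.integral_cong[OF refl])
          fix x :: "nat \<Rightarrow> 'a" assume "x \<in> space (PiM {0} (\<lambda>_. \<nu>))"
          then have "x = emb (x 0)" unfolding emb_def
            by (auto simp: space_PiM PiE_def extensional_def)
          then show "g x = (g \<circ> emb) (x 0)" by simp
        qed
        also have "\<dots> = (\<integral>s. (g \<circ> emb) s \<partial>\<nu>)"
          by (rule product_integral_singleton) (use gm em in auto)
        also have "\<dots> = (\<integral>s. (\<integral>t. Y (kargs k s t z) \<partial>\<nu>) \<partial>\<nu>)"
        proof -
          have "merge {2..<k} {0,1} (z, (emb s)(1:=t)) = kargs k s t z" for s t
            unfolding merge_def kargs_def emb_def restrict_def using k
            by (auto simp: fun_eq_iff)
          then show ?thesis by (simp add: g_def F_def)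
        qed
        also have "\<dots> = signed_dint (\<lambda>x y. Y (kargs k x y z)) \<nu> (null_measure sphere_borel)"
          by (simp add: signed_dint_def dint_def)
        also have "0 \<le> \<dots>"
        proof -
          have f1: "finite_measure \<nu>" using P by (rule prob_space.finite_measure)
          have f2: "finite_measure (null_measure (sphere_borel::'a measure))"
            by (rule finite_measureI) simp
          show ?thesis using pd zS f1 S f2 unfolding k_pos_def_def
            by (metis sets_null_measure)
        qed
        finally show ?thesis by (simp add: g_def)
      qed
    qed
    finally show ?thesis by (simp add: F_def)
  qed
qed

theorem proposition2p6:
  fixes Y :: "(nat \<Rightarrow> 'a::euclidean_space) \<Rightarrow> real" and k :: nat
    and \<mu> :: "'a measure"
  assumes "2 \<le> k"
    and "sym12_kernel k Y"
    and "k_pos_def k Y"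
    and "prob_space \<mu>" and "sets \<mu> = sets sphere_borel"
    and "energy k Y \<mu> = 0"
  shows "\<forall>\<nu>. prob_space \<nu> \<and> sets \<nu> = sets sphere_borel \<longrightarrow> energy k Y \<mu> \<le> energy k Y \<nu>"
proof (intro allI impI, elim conjE)
  fix \<nu> :: "'a measure" assume P: "prob_space \<nu>" and S: "sets \<nu> = sets sphere_borel"
  interpret product_sigma_finite "\<lambda>_. \<nu>"
    unfolding product_sigma_finite_def using P prob_space_imp_sigma_finite by blast
  have "0 \<le> energy k Y \<nu>"
  proof (cases "integrable (PiM {..<k} (\<lambda>_. \<nu>)) Y")
    case False
    then show ?thesis unfolding energy_def by (simp add: not_integrable_integral_eq)
  next
    case True
    have e: "{..<k} = {2..<k} \<union> {0,1}" using assms(1) by auto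
    have "energy k Y \<nu> = (\<integral>z. (\<integral>y. Y (merge {2..<k} {0,1} (z, y)) \<partial>PiM {0,1} (\<lambda>_. \<nu>)) \<partial>PiM {2..<k} (\<lambda>_. \<nu>))"
      unfolding energy_def e by (rule product_integral_fold) (use True e in auto)
    also have "0 \<le> \<dots>"
      by (rule integral_nonneg_AE, rule AE_I2, rule inner_nonneg[OF assms(1,3) P S])
    finally show ?thesis .
  qed
  then show "energy k Y \<mu> \<le> energy k Y \<nu>" using assms(6) by simp
qed

end
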